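(* Let $K\in\mathbb{N}^+$, let $a_1,\dots,a_K\in\mathbb{R}$ be rationally independent, and let $g:\mathbb{R}\to\mathbb{R}$ be periodic with period $T$, i.e. $g(x+T)=g(x)$ for all $x$. Assume there exist $x_1,x_2\in\mathbb{R}$ with $0<x_2-x_1<T$ such that $g$ is continuous on $[x_1,x_2]$, and set $M_1=\min_{x\in[x_1,x_2]}g(x)$, $M_2=\max_{x\in[x_1,x_2]}g(x)$. Then the set $\{[g(wa_1),g(wa_2),\dots,g(wa_K)]^T: w\in\mathbb{R}\}$ is dense in $[M_1,M_2]^K$, i.e., for every $\boldsymbol{\xi}\in[M_1,M_2]^K$ and every $\varepsilon>0$ there is $w\in\mathbb{R}$ with $\max_{k}|g(wa_k)-\xi_k|<\varepsilon$.
   Context: Real numbers $a_1,\dots,a_K$ are rationally independent if whenever $\lambda_1,\dots,\lambda_K\in\mathbb{Q}$ satisfy $\sum_{k=1}^K\lambda_k a_k=0$, then $\lambda_1=\dots=\lambda_K=0$. *)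

theory Defs
  imports "HOL-Analysis.Analysis"
begin

definition rationally_independent :: "nat \<Rightarrow> (nat \<Rightarrow> real) \<Rightarrow> bool" where
  "rationally_independent K a \<longleftrightarrow>
     (\<forall>c :: nat \<Rightarrow> real. (\<forall>k\<in>{1..K}. c k \<in> \<rat>) \<and> (\<Sum>k=1..K. c k * a k) = 0
        \<longrightarrow> (\<forall>k\<in>{1..K}. c k = 0))"

end

theory Submission
  imports Defs
begin

lemma theta_inj:
  assumes T: "T \<noteq> 0" and ri: "rationally_independent K a"
  shows "inj_on (\<lambda>i. a (Suc i) / T) {..<K}"
proof (rule inj_onI, rule ccontr)
  fix i j assume i: "i \<in> {..<K}" and j: "j \<in> {..<K}" and e: "a (Suc i) / T = a (Suc j) / T" and ne: "i \<noteq> j"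
  define c :: "nat \<Rightarrow> real" where "c = (\<lambda>k. if k = Suc i then 1 else if k = Suc j then -1 else 0)"
  have eq: "a (Suc i) = a (Suc j)" using e T by (simp add: field_simps)
  have "(\<Sum>k=1..K. c k * a k) = (\<Sum>k\<in>{Suc i, Suc j}. c k * a k)"
    by (rule sum.mono_neutral_right) (use i j in \<open>auto simp: c_def\<close>)
  also have "\<dots> = 0" using ne eq by (simp add: c_def)
  finally have s0: "(\<Sum>k=1..K. c k * a k) = 0" .
  have q: "\<forall>k\<in>{1..K}. c k \<in> \<rat>" by (simp add: c_def)
  have "\<forall>k\<in>{1..K}. c k = 0" using ri q s0 unfolding rationally_independent_def by blast
  moreover have "Suc i \<in> {1..K}" using i by simp
  ultimately have "c (Suc i) = 0" by blast
  then show False by (simp add: c_def)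
qed

lemma theta_indep:
  assumes T: "T \<noteq> 0" and ri: "rationally_independent K a"
  shows "module.independent (\<lambda>r. (*) (real_of_int r)) ((\<lambda>i. a (Suc i) / T) ` {..<K})"
proof
  define \<theta> where "\<theta> = (\<lambda>i. a (Suc i) / T)"
  have inj: "inj_on \<theta> {..<K}" using theta_inj[OF T ri] by (simp add: \<theta>_def)
  have M: "module (\<lambda>r. (*) (real_of_int r))"
    by (simp add: Modules.module.intro distrib_left mult.commute)
  assume "module.dependent (\<lambda>r. (*) (real_of_int r)) ((\<lambda>i. a (Suc i) / T) ` {..<K})"
  then obtain t u v where t: "finite t" "t \<subseteq> \<theta> ` {..<K}" and s: "(\<Sum>v\<in>t. real_of_int (u v) * v) = 0"
    and v: "v \<in> t" "u v \<noteq> 0"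
    unfolding module.dependent_explicit[OF M] \<theta>_def by blast
  define I where "I = {i. i < K \<and> \<theta> i \<in> t}"
  have tI: "t = \<theta> ` I" using t(2) by (auto simp: I_def)
  have injI: "inj_on \<theta> I" using inj by (rule inj_on_subset) (auto simp: I_def)
  define c :: "nat \<Rightarrow> real" where "c = (\<lambda>k. if 1 \<le> k \<and> k \<le> K \<and> \<theta> (k - 1) \<in> t then of_int (u (\<theta> (k-1))) else 0)"
  have "(\<Sum>k=1..K. c k * a k) = (\<Sum>i<K. c (Suc i) * a (Suc i))"
    by (simp add: sum.atLeast1_atMost_eq)
  also have "\<dots> = (\<Sum>i\<in>I. c (Suc i) * a (Suc i))"
    by (rule sum.mono_neutral_right) (auto simp: I_def c_def)
  also have "\<dots> = (\<Sum>i\<in>I. T * (real_of_int (u (\<theta> i)) * \<theta> i))"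
    by (rule sum.cong) (use T in \<open>auto simp: I_def c_def \<theta>_def\<close>)
  also have "\<dots> = T * (\<Sum>i\<in>I. real_of_int (u (\<theta> i)) * \<theta> i)"
    by (simp add: sum_distrib_left)
  also have "(\<Sum>i\<in>I. real_of_int (u (\<theta> i)) * \<theta> i) = (\<Sum>v\<in>t. real_of_int (u v) * v)"
    unfolding tI by (rule sum.reindex[OF injI, symmetric, unfolded comp_def])
  finally have "(\<Sum>k=1..K. c k * a k) = 0" using s by simp
  moreover have "\<forall>k\<in>{1..K}. c k \<in> \<rat>" by (auto simp: c_def)
  ultimately have "\<forall>k\<in>{1..K}. c k = 0" using ri unfolding rationally_independent_def by blast
  moreover obtain i where "i < K" "v = \<theta> i" using v t(2) by auto
  ultimately have "c (Suc i) = 0" "i < K" "v = \<theta> i" by auto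
  then have "real_of_int (u v) = 0" using v(1) by (simp add: c_def)
  then show False using v(2) by simp
qed

lemma per_int:
  assumes "\<forall>x. g (x + T) = g x"
  shows "g (x + of_int n * T) = (g x :: real)"
proof -
  have nat: "g (y + of_nat m * T) = g y" for y m
  proof (induction m)
    case (Suc m)
    have "g (y + of_nat (Suc m) * T) = g (y + of_nat m * T + T)" by (simp add: algebra_simps)
    also have "\<dots> = g (y + of_nat m * T)" using assms by blast
    finally show ?case using Suc by simp
  qed simp
  show ?thesis
  proof (cases "n \<ge> 0")
    case True
    then show ?thesis using nat[of x "nat n"] by simp
  next
    case False
    have "g x = g (x + of_int n * T + of_nat (nat (-n)) * T)" using False by simp
    then show ?thesis using nat[of "x + of_int n * T" "nat (-n)"] by simp
  qed
qed

theorem lemma19: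
  fixes K :: nat and a :: "nat \<Rightarrow> real" and g :: "real \<Rightarrow> real"
    and T x1 x2 :: real and \<xi> :: "nat \<Rightarrow> real" and \<epsilon> :: real
  assumes "K \<ge> 1"
    and "rationally_independent K a"
    and "\<forall>x. g (x + T) = g x"
    and "0 < x2 - x1" and "x2 - x1 < T"
    and "continuous_on {x1..x2} g"
    and "\<forall>k\<in>{1..K}. \<xi> k \<in> {(INF x\<in>{x1..x2}. g x) .. (SUP x\<in>{x1..x2}. g x)}"
    and "\<epsilon> > 0"
  shows "\<exists>w::real. (MAX k\<in>{1..K}. \<bar>g (w * a k) - \<xi> k\<bar>) < \<epsilon>"
proof -
  note cont = assms(6)
  have T: "T > 0" using assms(4,5) by linarith
  have S: "compact {x1..x2}" "{x1..x2} \<noteq> {}" using assms(4) by auto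
  obtain xm where xm: "xm \<in> {x1..x2}" "\<forall>y\<in>{x1..x2}. g xm \<le> g y"
    using continuous_attains_inf[OF S cont] by blast
  obtain xM where xM: "xM \<in> {x1..x2}" "\<forall>y\<in>{x1..x2}. g y \<le> g xM"
    using continuous_attains_sup[OF S cont] by blast
  have lo0: "g xm \<le> (INF x\<in>{x1..x2}. g x)"
    using xm S(2) by (intro cINF_greatest) auto
  have hi0: "(SUP x\<in>{x1..x2}. g x) \<le> g xM"
    using xM S(2) by (intro cSUP_least) auto
  have conn: "connected (g ` {x1..x2})"
    by (rule connected_continuous_image[OF cont]) simp
  have Icc: "{g xm..g xM} \<subseteq> g ` {x1..x2}"
    by (intro connected_contains_Icc[OF conn] imageI xm(1) xM(1))
  have "\<exists>y. y \<in> {x1..x2} \<and> g y = \<xi> k" if k: "k\<in>{1..K}" for k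
  proof -
    have b: "(INF x\<in>{x1..x2}. g x) \<le> \<xi> k" "\<xi> k \<le> (SUP x\<in>{x1..x2}. g x)"
      using assms(7) k by simp_all
    have "g xm \<le> \<xi> k" using lo0 b(1) by (rule order_trans)
    moreover have "\<xi> k \<le> g xM" using b(2) hi0 by (rule order_trans)
    ultimately have "\<xi> k \<in> {g xm..g xM}" by simp
    then have "\<xi> k \<in> g ` {x1..x2}" using Icc by (rule subsetD[rotated])
    then obtain z where "z \<in> {x1..x2}" "\<xi> k = g z" by (rule imageE)
    then show ?thesis by metis
  qed
  then have ex: "\<forall>k\<in>{1..K}. \<exists>y. y \<in> {x1..x2} \<and> g y = \<xi> k" by blast
  obtain y where y0: "\<forall>k\<in>{1..K}. y k \<in> {x1..x2} \<and> g (y k) = \<xi> k"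
    using bchoice[OF ex] by blast
  have y: "y k \<in> {x1..x2} \<and> g (y k) = \<xi> k" if "k\<in>{1..K}" for k using y0 that by blast
  have uc: "uniformly_continuous_on {x1..x2} g"
    by (rule compact_uniformly_continuous[OF cont S(1)])
  obtain \<delta> where d: "\<delta> > 0" and dd0: "\<forall>x\<in>{x1..x2}. \<forall>x'\<in>{x1..x2}. dist x' x < \<delta> \<longrightarrow> dist (g x') (g x) < \<epsilon>"
    using uc assms(8) unfolding uniformly_continuous_on_def by blast
  have dd: "\<bar>g x' - g x\<bar> < \<epsilon>" if "x \<in> {x1..x2}" "x' \<in> {x1..x2}" "\<bar>x' - x\<bar> < \<delta>" for x x'
    using dd0 that unfolding dist_real_def by blast
  define \<eta> where "\<eta> = min (\<delta>/2) ((x2-x1)/2)"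
  have eta: "\<eta> > 0" "\<eta> \<le> \<delta>/2" "2*\<eta> \<le> x2 - x1" using d assms(4) unfolding \<eta>_def by (auto simp: min_def)
  define tg where "tg = (\<lambda>k. max (x1+\<eta>) (min (x2-\<eta>) (y k)))"
  obtain w h where wh: "\<And>i. i < K \<Longrightarrow> \<bar>w * (a (Suc i) / T) - of_int (h i) - tg (Suc i) / T\<bar> < \<eta> / T"
  proof -
    have T0: "T \<noteq> 0" using T by simp
    have ep: "\<eta> / T > 0" using T eta(1) by simp
    show ?thesis
      by (rule Kronecker_thm_1[OF theta_indep[OF T0 assms(2)] theta_inj[OF T0 assms(2)] ep, where \<alpha>="\<lambda>i. tg (Suc i) / T"]) (rule that)
  qed
  have main: "\<bar>g (w * a k) - \<xi> k\<bar> < \<epsilon>" if k: "k \<in> {1..K}" for k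
  proof -
    obtain i where i: "k = Suc i" "i < K" using k by (cases k) auto
    define z where "z = w * a k - of_int (h i) * T"
    have "\<bar>w * (a (Suc i) / T) - of_int (h i) - tg (Suc i) / T\<bar> * T < \<eta>"
      using wh[OF i(2)] T by (simp add: field_simps)
    also have "\<bar>w * (a (Suc i) / T) - of_int (h i) - tg (Suc i) / T\<bar> * T = \<bar>z - tg k\<bar>"
    proof -
      have e: "(w * (a (Suc i) / T) - of_int (h i) - tg (Suc i) / T) * T = z - tg k"
        using T by (simp add: z_def i(1) field_simps)
      show ?thesis using T by (simp add: e[symmetric] abs_mult)
    qed
    finally have zt: "\<bar>z - tg k\<bar> < \<eta>" .
    have yk: "y k \<in> {x1..x2}" "g (y k) = \<xi> k" using y[OF k] by auto
    have t1: "x1 + \<eta> \<le> tg k" unfolding tg_def by (rule max.cobounded1)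
    have t2: "tg k \<le> x2 - \<eta>" unfolding tg_def using eta(3) by simp
    have t3: "\<bar>tg k - y k\<bar> \<le> \<eta>" using yk(1) eta unfolding tg_def max_def min_def by auto
    have zz: "tg k - \<eta> < z" "z < tg k + \<eta>" using zt by linarith+
    have zS: "z \<in> {x1..x2}" using zz t1 t2 by simp
    have "\<bar>z - y k\<bar> < \<delta>" using zz t3 eta(2) by linarith
    then have "\<bar>g z - g (y k)\<bar> < \<epsilon>" using dd[OF yk(1) zS] by simp
    moreover have "g (w * a k) = g z"
      using per_int[OF assms(3), of z "h i"] by (simp add: z_def)
    ultimately show ?thesis using yk(2) by simp
  qed
  show ?thesis
    using main assms(1) by (intro exI[of _ w]) (simp add: Max_less_iff)
qed

end
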